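(* Let $n\in\mathbb N$, let $f=\sum_{j\ge0}a_jz^j$ be extremal for $M_n$ with $f(0)>0$, and write $\log f(z)=\sum_{j\ge0}b_jz^j$ for a holomorphic logarithm of $f$. Let $P(z)=a_n+2\sum_{j=1}^na_{n-j}z^j$. If $\mathrm{Re}\,P$ vanishes at $n$ distinct points $z_1,\dots,z_n\in\partial\mathbb D$, then \[b_k=-\frac{2}{k}\sum_{j=1}^nz_j^k,\qquad 1\le k\le n.\]
   Context: $\mathbb D$ is the open unit disc; $\mathcal B_0=\{f$ holomorphic on $\mathbb D: 0<|f|\le1\}$; $M_n(f)=\mathrm{Re}\,a_n$; $f\in\mathcal B_0$ is extremal for $M_n$ if $M_n(f)\ge M_n(F)$ for all $F\in\mathcal B_0$ (for such $f$, $a_n>0$). *)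

theory Defs
  imports "HOL-Analysis.Analysis"
begin

definition taylor_coeff :: "(complex \<Rightarrow> complex) \<Rightarrow> nat \<Rightarrow> complex" where
  "taylor_coeff f j = (deriv ^^ j) f 0 / of_nat (fact j)"

definition B0 :: "(complex \<Rightarrow> complex) set" where
  "B0 = {f. f holomorphic_on ball 0 1 \<and> (\<forall>z\<in>ball 0 1. 0 < norm (f z) \<and> norm (f z) \<le> 1)}"

definition M :: "nat \<Rightarrow> (complex \<Rightarrow> complex) \<Rightarrow> real" where
  "M n f = Re (taylor_coeff f n)"

definition extremal :: "nat \<Rightarrow> (complex \<Rightarrow> complex) \<Rightarrow> bool" where
  "extremal n f \<longleftrightarrow> f \<in> B0 \<and> (\<forall>F\<in>B0. M n F \<le> M n f)"

end

theory Submission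
  imports Defs "HOL-Complex_Analysis.Complex_Analysis" "HOL-Computational_Algebra.Polynomial_FPS"
begin

lemma tc_0: "taylor_coeff f 0 = f 0"
  by (simp add: taylor_coeff_def)

lemma tc_mult:
  assumes "f holomorphic_on ball 0 1" "g holomorphic_on ball 0 1"
  shows "taylor_coeff (\<lambda>z. f z * g z) k = (\<Sum>i=0..k. taylor_coeff f i * taylor_coeff g (k-i))"
proof -
  have "(deriv ^^ k) (\<lambda>z. f z * g z) 0 = (\<Sum>i = 0..k. of_nat (k choose i) * (deriv ^^ i) f 0 * (deriv ^^ (k-i)) g 0)"
    by (rule higher_deriv_mult[OF assms]) auto
  hence "taylor_coeff (\<lambda>z. f z * g z) k = (\<Sum>i = 0..k. of_nat (k choose i) * (deriv ^^ i) f 0 * (deriv ^^ (k-i)) g 0) / of_nat (fact k)"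
    by (simp add: taylor_coeff_def)
  also have "\<dots> = (\<Sum>i = 0..k. of_nat (k choose i) * (deriv ^^ i) f 0 * (deriv ^^ (k-i)) g 0 / of_nat (fact k))"
    by (simp add: sum_divide_distrib)
  also have "\<dots> = (\<Sum>i=0..k. taylor_coeff f i * taylor_coeff g (k-i))"
  proof (rule sum.cong[OF refl])
    fix i assume i: "i \<in> {0..k}"
    have "(of_nat (k choose i) :: complex) = of_nat (fact k) / (of_nat (fact i) * of_nat (fact (k-i)))"
      using i binomial_fact[of i k] by (simp add: of_nat_fact)
    thus "of_nat (k choose i) * (deriv ^^ i) f 0 * (deriv ^^ (k-i)) g 0 / of_nat (fact k) = taylor_coeff f i * taylor_coeff g (k-i)"
      by (simp add: taylor_coeff_def field_simps)
  qed
  finally show ?thesis .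
qed

lemma tc_cong:
  assumes "\<And>z. z \<in> ball 0 1 \<Longrightarrow> f z = g z"
  shows "taylor_coeff f k = taylor_coeff g k"
proof -
  have "eventually (\<lambda>x. f x = g x) (nhds 0)"
    unfolding eventually_nhds using assms by (intro exI[of _ "ball 0 1"]) auto
  thus ?thesis unfolding taylor_coeff_def by (subst higher_deriv_cong_ev[of f g 0 0]) auto
qed

lemma tc_lin: "taylor_coeff (\<lambda>z. a + b * z) k = (if k = 0 then a else if k = 1 then b else 0)"
proof -
  have "(deriv ^^ k) (\<lambda>z. a + b * z) 0 = (deriv ^^ k) (\<lambda>z. a) 0 + (deriv ^^ k) (\<lambda>z. b * z) 0"
    by (rule higher_deriv_add[of _ UNIV]) auto
  thus ?thesis by (simp add: taylor_coeff_def)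
qed

lemma tc_deriv: "taylor_coeff (deriv f) k = of_nat (Suc k) * taylor_coeff f (Suc k)"
proof -
  have "(deriv ^^ k) (deriv f) = (deriv ^^ Suc k) f" by (simp add: funpow_Suc_right del: funpow.simps)
  moreover have "(of_nat (fact (Suc k)) :: complex) = of_nat (Suc k) * of_nat (fact k)"
    by (metis fact_Suc of_nat_id of_nat_mult)
  moreover have "(of_nat (fact k) :: complex) \<noteq> 0" by simp
  ultimately show ?thesis unfolding taylor_coeff_def by (simp del: of_nat_Suc fact_Suc)
qed

lemma tc_cmult:
  assumes "f holomorphic_on ball 0 1"
  shows "taylor_coeff (\<lambda>z. c * f z) k = c * taylor_coeff f k"
  using higher_deriv_cmult[OF assms, of 0 k c] by (simp add: taylor_coeff_def)

lemma extremal_real: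
  assumes "extremal n f"
  shows "Im (taylor_coeff f n) = 0"
proof (rule ccontr)
  let ?a = "taylor_coeff f n"
  assume H: "Im ?a \<noteq> 0"
  hence a0: "?a \<noteq> 0" by auto
  define c where "c = cnj ?a / norm ?a"
  have nc: "norm c = 1" using a0 by (simp add: c_def norm_divide)
  have fB: "f \<in> B0" and ext: "\<forall>F\<in>B0. M n F \<le> M n f" using assms by (auto simp: extremal_def)
  have hol: "f holomorphic_on ball 0 1" using fB by (simp add: B0_def)
  have "(\<lambda>z. c * f z) \<in> B0"
    using fB nc by (auto simp: B0_def norm_mult holomorphic_intros)
  hence "M n (\<lambda>z. c * f z) \<le> M n f" using ext by blast
  hence "Re (c * ?a) \<le> Re ?a" by (simp add: M_def tc_cmult[OF hol])
  moreover have "c * ?a = of_real (norm ?a)"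
  proof -
    have "cnj ?a * ?a = (of_real (norm ?a))^2"
      using complex_norm_square[of ?a] by (simp add: mult.commute)
    hence "c * ?a = (of_real (norm ?a))^2 / of_real (norm ?a)" by (simp add: c_def)
    thus ?thesis using a0 by (simp add: power2_eq_square)
  qed
  ultimately have "norm ?a \<le> Re ?a" by simp
  hence "(norm ?a)^2 \<le> (Re ?a)^2" using norm_ge_zero power_mono by blast
  hence "Im ?a ^2 \<le> 0" by (simp add: cmod_power2)
  thus False using H by simp
qed

lemma phi_coeffs:
  fixes e :: real and w :: complex
  assumes e: "0 < e" "e < 1" and w: "norm w = 1"
  defines "E \<equiv> complex_of_real e"
  defines "phi \<equiv> (\<lambda>z. (1 - w * z) / ((1 + E) - (1 - E) * w * z))"
  shows "taylor_coeff phi 0 = 1 / (1 + E)"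
    and "\<And>k. taylor_coeff phi (Suc k) = - 2 * E * ((1 - E) / (1 + E)) ^ k * w ^ Suc k / (1 + E)^2"
    and "phi holomorphic_on ball 0 1"
    and "\<And>z. z \<in> ball 0 1 \<Longrightarrow> phi z \<noteq> 0 \<and> norm (phi z) \<le> 1"
proof -
  have E1': "1 + E = of_real (1 + e)" by (simp add: E_def)
  have E1: "1 + E \<noteq> 0" unfolding E1' using e by (simp only: of_real_eq_0_iff)
  have D: "(1 + E) - (1 - E) * w * z \<noteq> 0" if "z \<in> ball 0 1" for z
  proof
    assume "(1 + E) - (1 - E) * w * z = 0"
    hence "(1 - E) * w * z = 1 + E" by (simp only: right_minus_eq)
    hence "norm ((1 - E) * w * z) = norm (1 + E)" by simp
    moreover have "norm ((1 - E) * w * z) = (1 - e) * norm z"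
    proof -
      have "1 - E = of_real (1 - e)" by (simp add: E_def)
      hence "norm (1 - E) = norm (of_real (1 - e) :: complex)" by (simp only:)
      also have "\<dots> = \<bar>1 - e\<bar>" by (rule norm_of_real)
      also have "\<dots> = 1 - e" using e by simp
      finally show ?thesis using w by (simp add: norm_mult)
    qed
    moreover have "norm (1 + E) = 1 + e"
    proof -
      have "norm (1 + E) = norm (of_real (1 + e) :: complex)" by (simp only: E1')
      also have "\<dots> = \<bar>1 + e\<bar>" by (rule norm_of_real)
      also have "\<dots> = 1 + e" using e by simp
      finally show ?thesis .
    qed
    moreover have "norm z < 1" using that by simp
    moreover have "(1 - e) * norm z \<le> 1 - e" using \<open>norm z < 1\<close> e
      by (simp add: mult_left_le_one_le)
    ultimately show False using e by linarith
  qed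
  show hol: "phi holomorphic_on ball 0 1"
    unfolding phi_def using D by (intro holomorphic_intros) auto
  show "phi z \<noteq> 0 \<and> norm (phi z) \<le> 1" if z: "z \<in> ball 0 1" for z
  proof
    have nz: "norm (w * z) < 1" using z w by (simp add: norm_mult)
    hence "1 - w * z \<noteq> 0" by (metis norm_one order_less_irrefl right_minus_eq)
    thus "phi z \<noteq> 0" using D[OF z] by (simp add: phi_def)
    define u where "u = w * z"
    have nu: "norm u < 1" using nz by (simp add: u_def)
    have "(norm (1 - u))^2 \<le> (norm ((1 + E) - (1 - E) * u))^2"
    proof -
      define x where "x = Re u"
      define y where "y = Im u"
      have "(norm u)^2 < 1" using nu by (simp add: abs_square_less_1)
      hence xy: "x^2 + y^2 < 1" by (simp add: x_def y_def cmod_power2)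
      have n1: "(norm (1 - u))^2 = (1 - x)^2 + y^2" by (simp add: cmod_power2 x_def y_def)
      have n2: "(norm ((1 + E) - (1 - E) * u))^2 = (1 + e - (1 - e) * x)^2 + ((1 - e) * y)^2"
        by (simp add: cmod_power2 x_def y_def E_def)
      have "(1 + e - (1 - e) * x)^2 + ((1 - e) * y)^2 - ((1 - x)^2 + y^2)
          = 2 * e * (1 - (x^2 + y^2)) + e^2 * ((1 + x)^2 + y^2)"
        by (simp add: power2_eq_square algebra_simps)
      moreover have "0 \<le> 2 * e * (1 - (x^2 + y^2)) + e^2 * ((1 + x)^2 + y^2)"
        using e xy by (intro add_nonneg_nonneg mult_nonneg_nonneg) auto
      ultimately show ?thesis using n1 n2 by linarith
    qed
    hence "norm (1 - u) \<le> norm ((1 + E) - (1 - E) * u)"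
      using power2_le_imp_le norm_ge_zero by blast
    thus "norm (phi z) \<le> 1" using D[OF z]
      by (simp add: phi_def u_def norm_divide divide_le_eq_1 mult.assoc)
  qed
  define c where "c k = taylor_coeff phi k" for k
  have ND: "\<And>z. z \<in> ball 0 1 \<Longrightarrow> phi z * ((1 + E) + (- (1 - E) * w) * z) = 1 + (- w) * z"
  proof -
    fix z :: complex assume "z \<in> ball 0 1"
    have "(1 + E) + (- (1 - E) * w) * z = (1 + E) - (1 - E) * w * z" by (simp add: algebra_simps)
    moreover have "1 + (- w) * z = 1 - w * z" by simp
    ultimately show "phi z * ((1 + E) + (- (1 - E) * w) * z) = 1 + (- w) * z"
      using D[OF \<open>z \<in> ball 0 1\<close>] by (simp add: phi_def)
  qed
  have rec: "taylor_coeff (\<lambda>z. 1 + (- w) * z) k = (\<Sum>i=0..k. c i * taylor_coeff (\<lambda>z. (1 + E) + (- (1 - E) * w) * z) (k - i))" for k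
  proof -
    have "taylor_coeff (\<lambda>z. 1 + (- w) * z) k = taylor_coeff (\<lambda>z. phi z * ((1 + E) + (- (1 - E) * w) * z)) k"
      using ND by (intro tc_cong) auto
    also have "\<dots> = (\<Sum>i=0..k. c i * taylor_coeff (\<lambda>z. (1 + E) + (- (1 - E) * w) * z) (k - i))"
      unfolding c_def by (rule tc_mult[OF hol]) (intro holomorphic_intros)
    finally show ?thesis .
  qed
  define dco where "dco k = (if k = 0 then 1 + E else if k = 1 then - (1 - E) * w else 0)" for k :: nat
  define nco where "nco k = (if k = 0 then 1 else if k = 1 then - w else 0)" for k :: nat
  have rec': "nco k = (\<Sum>i=0..k. c i * dco (k - i))" for k
    using rec[of k] unfolding tc_lin nco_def dco_def by simp
  have c0: "c 0 = 1 / (1 + E)"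
    using rec'[of 0] E1 by (simp add: nco_def dco_def field_simps)
  thus "taylor_coeff phi 0 = 1 / (1 + E)" by (simp add: c_def)
  have step: "c (Suc m) * (1 + E) - (1 - E) * w * c m = (if m = 0 then - w else 0)" for m
  proof -
    have "(\<Sum>i=0..Suc m. c i * dco (Suc m - i)) = (\<Sum>i=0..m. c i * dco (Suc m - i)) + c (Suc m) * (1 + E)"
      by (simp add: dco_def)
    also have "(\<Sum>i=0..m. c i * dco (Suc m - i)) = (\<Sum>i=0..m. if i = m then c m * (- (1 - E) * w) else 0)"
      by (intro sum.cong refl) (auto simp: dco_def)
    also have "\<dots> = c m * (- (1 - E) * w)" by simp
    finally show ?thesis using rec'[of "Suc m"] by (auto simp: nco_def algebra_simps)
  qed
  define r where "r = (1 - E) / (1 + E)"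
  have "c (Suc k) = - 2 * E * r ^ k * w ^ Suc k / (1 + E)^2" for k
  proof (induction k)
    case 0
    have c0': "c 0 * (1 + E) = 1" using c0 E1 by simp
    have "(c (Suc 0) * (1 + E) - (1 - E) * w * c 0) * (1 + E) = - w * (1 + E)"
      using step[of 0] by simp
    hence "c (Suc 0) * (1 + E)^2 - (1 - E) * w * (c 0 * (1 + E)) = - w * (1 + E)"
      by (simp add: power2_eq_square algebra_simps)
    hence h: "c (Suc 0) * (1 + E)^2 = - 2 * E * w" unfolding c0' by (simp add: algebra_simps eq_neg_iff_add_eq_0)
    have "(1 + E)^2 \<noteq> 0" using E1 by simp
    hence "c (Suc 0) = c (Suc 0) * (1 + E)^2 / (1 + E)^2" by simp
    also have "\<dots> = (- 2 * E * w) / (1 + E)^2" by (simp only: h)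
    finally show ?case by simp
  next
    case (Suc k)
    have "c (Suc (Suc k)) * (1 + E) = (1 - E) * w * c (Suc k)"
      using step[of "Suc k"] by simp
    hence "c (Suc (Suc k)) = (1 - E) * w * c (Suc k) / (1 + E)"
      using E1 by (simp add: eq_divide_eq)
    also have "\<dots> = r * w * c (Suc k)" by (simp add: r_def)
    also have "\<dots> = r * w * (- 2 * E * r ^ k * w ^ Suc k / (1 + E)^2)" by (simp only: Suc)
    also have "\<dots> = - 2 * E * r ^ Suc k * w ^ Suc (Suc k) / (1 + E)^2" by (simp add: algebra_simps)
    finally show ?case .
  qed
  thus "\<And>k. taylor_coeff phi (Suc k) = - 2 * E * ((1 - E) / (1 + E)) ^ k * w ^ Suc k / (1 + E)^2"
    by (simp add: c_def r_def)
qed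

lemma aux_alg:
  fixes x A Q :: complex
  assumes "1 + x \<noteq> 0"
  shows "1 / (1 + x) * A + (- 2 * x / (1 + x)^2) * Q = A + x * (- A / (1 + x) - 2 / (1 + x)^2 * Q)"
  using assms by (simp add: field_simps power2_eq_square)

lemma RePnonneg:
  assumes ext0: "extremal n f" and w: "norm w = 1"
  shows "0 \<le> Re (taylor_coeff f n + 2 * (\<Sum>i=1..n. taylor_coeff f (n - i) * w ^ i))"
proof -
  define a where "a = taylor_coeff f"
  have fB: "f \<in> B0" and ext: "\<forall>F\<in>B0. M n F \<le> M n f" using ext0 by (auto simp: extremal_def)
  have hol: "f holomorphic_on ball 0 1" using fB by (simp add: B0_def)
  define Psi where "Psi = (\<lambda>e::real. - a n / (1 + of_real e)
      - 2 / (1 + of_real e)^2 * (\<Sum>i=1..n. ((1 - of_real e) / (1 + of_real e)) ^ (i - 1) * w ^ i * a (n - i)))"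
  have le: "Re (Psi e) \<le> 0" if e: "0 < e" "e < 1" for e
  proof -
    define E where "E = complex_of_real e"
    define phi where "phi = (\<lambda>z. (1 - w * z) / ((1 + E) - (1 - E) * w * z))"
    note pc = phi_coeffs[OF e w, folded E_def, folded phi_def]
    have E1: "1 + E \<noteq> 0" proof -
      have "1 + E = of_real (1 + e)" by (simp add: E_def)
      thus ?thesis using e by (simp only: of_real_eq_0_iff) 
    qed
    have "(\<lambda>z. phi z * f z) \<in> B0"
      unfolding B0_def
    proof (intro CollectI conjI ballI)
      show "(\<lambda>z. phi z * f z) holomorphic_on ball 0 1" using pc(3) hol by (intro holomorphic_intros)
      fix z :: complex assume z: "z \<in> ball 0 1"
      have p: "phi z \<noteq> 0" "norm (phi z) \<le> 1" using pc(4)[OF z] unfolding phi_def by auto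
      have q: "f z \<noteq> 0" "norm (f z) \<le> 1" using fB z by (auto simp: B0_def)
      show "0 < norm (phi z * f z)" using p q by simp
      show "norm (phi z * f z) \<le> 1" unfolding norm_mult using p q by (intro mult_le_one) auto
    qed
    hence "M n (\<lambda>z. phi z * f z) \<le> M n f" using ext by blast
    hence ineq: "Re (taylor_coeff (\<lambda>z. phi z * f z) n) \<le> Re (a n)" by (simp add: M_def a_def)
    have "taylor_coeff (\<lambda>z. phi z * f z) n = (\<Sum>i=0..n. taylor_coeff phi i * a (n - i))"
      unfolding a_def by (rule tc_mult[OF pc(3) hol])
    also have "\<dots> = taylor_coeff phi 0 * a n + (\<Sum>i=1..n. taylor_coeff phi i * a (n - i))"
      by (simp add: sum.atLeast_Suc_atMost)
    also have "(\<Sum>i=1..n. taylor_coeff phi i * a (n - i))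
        = (\<Sum>i=1..n. (- 2 * E * ((1 - E) / (1 + E)) ^ (i - 1) * w ^ i / (1 + E)^2) * a (n - i))"
    proof (rule sum.cong[OF refl])
      fix i assume "i \<in> {1..n}"
      hence "i = Suc (i - 1)" by auto
      hence "taylor_coeff phi i = taylor_coeff phi (Suc (i - 1))" by simp
      also have "\<dots> = - 2 * E * ((1 - E) / (1 + E)) ^ (i - 1) * w ^ Suc (i - 1) / (1 + E)^2" by (rule pc(2))
      also have "w ^ Suc (i - 1) = w ^ i" using \<open>i = Suc (i - 1)\<close> by simp
      finally show "taylor_coeff phi i * a (n - i) = (- 2 * E * ((1 - E) / (1 + E)) ^ (i - 1) * w ^ i / (1 + E)^2) * a (n - i)" by simp
    qed
    also have "taylor_coeff phi 0 * a n + (\<Sum>i=1..n. (- 2 * E * ((1 - E) / (1 + E)) ^ (i - 1) * w ^ i / (1 + E)^2) * a (n - i))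
       = a n + E * Psi e"
    proof -
      have "(\<Sum>i=1..n. (- 2 * E * ((1 - E) / (1 + E)) ^ (i - 1) * w ^ i / (1 + E)^2) * a (n - i))
          = (- 2 * E / (1 + E)^2) * (\<Sum>i=1..n. ((1 - E) / (1 + E)) ^ (i - 1) * w ^ i * a (n - i))"
        by (simp add: sum_distrib_left algebra_simps)
      moreover have "Psi e = - a n / (1 + E) - 2 / (1 + E)^2 * (\<Sum>i=1..n. ((1 - E) / (1 + E)) ^ (i - 1) * w ^ i * a (n - i))"
        by (simp add: Psi_def E_def)
      ultimately show ?thesis using pc(1) aux_alg[OF E1, of "a n"] by simp
    qed
    finally have "Re (a n + E * Psi e) \<le> Re (a n)" using ineq by simp
    hence "e * Re (Psi e) \<le> 0" by (simp add: E_def)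
    thus ?thesis using e by (simp add: mult_le_0_iff)
  qed
  have "isCont Psi 0" unfolding Psi_def by (intro continuous_intros) auto
  hence "(Psi \<longlongrightarrow> Psi 0) (at_right 0)"
    unfolding isCont_def by (rule tendsto_mono[OF at_le, rotated]) auto
  hence lim: "((\<lambda>e. Re (Psi e)) \<longlongrightarrow> Re (Psi 0)) (at_right 0)" by (rule tendsto_Re)
  have "eventually (\<lambda>e. Re (Psi e) \<le> 0) (at_right (0::real))"
    unfolding eventually_at_right_field using le by (intro exI[of _ 1]) auto
  hence "Re (Psi 0) \<le> 0" by (intro tendsto_upperbound[OF lim]) auto
  moreover have "Psi 0 = - (a n + 2 * (\<Sum>i=1..n. a (n - i) * w ^ i))"
  proof -
    have "Psi 0 = - a n - 2 * (\<Sum>i=1..n. w ^ i * a (n - i))" by (simp add: Psi_def)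
    also have "(\<Sum>i=1..n. w ^ i * a (n - i)) = (\<Sum>i=1..n. a (n - i) * w ^ i)" by (simp add: mult.commute)
    finally show ?thesis by simp
  qed
  ultimately show ?thesis by (simp add: a_def)
qed

lemma fermat_step:
  assumes ext0: "extremal n f" and z0: "norm z0 = 1"
    and zero: "Re (taylor_coeff f n + 2 * (\<Sum>i=1..n. taylor_coeff f (n - i) * z0 ^ i)) = 0"
  shows "(\<Sum>i=1..n. real i * Im (taylor_coeff f (n - i) * z0 ^ i)) = 0"
proof -
  define a where "a = taylor_coeff f"
  define C where "C i = a (n - i) * z0 ^ i" for i
  define h where "h t = Re (a n) + 2 * (\<Sum>i=1..n. Re (C i) * cos (real i * t) - Im (C i) * sin (real i * t))" for t
  have heq: "h t = Re (a n + 2 * (\<Sum>i=1..n. a (n - i) * (z0 * cis t) ^ i))" for t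
  proof -
    have "a (n - i) * (z0 * cis t) ^ i = C i * cis (real i * t)" for i
    proof -
      have "(z0 * cis t) ^ i = z0 ^ i * cis t ^ i" by (rule power_mult_distrib)
      also have "cis t ^ i = cis (real i * t)" by (induct i) (simp_all add: cis_mult distrib_right)
      finally have "(z0 * cis t) ^ i = z0 ^ i * cis (real i * t)" .
      thus ?thesis by (simp add: C_def mult.assoc)
    qed
    hence "(\<Sum>i=1..n. a (n - i) * (z0 * cis t) ^ i) = (\<Sum>i=1..n. C i * cis (real i * t))" by simp
    moreover have "Re (\<Sum>i=1..n. C i * cis (real i * t)) = (\<Sum>i=1..n. Re (C i) * cos (real i * t) - Im (C i) * sin (real i * t))"
      by (simp add: Re_sum)
    ultimately show ?thesis by (simp add: h_def)
  qed
  have h0: "h 0 = 0" using zero heq[of 0] by (simp add: a_def)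
  have hge: "h 0 \<le> h t" for t
  proof -
    have "norm (z0 * cis t) = 1" using z0 by (simp add: norm_mult)
    from RePnonneg[OF ext0 this] have "0 \<le> h t" unfolding heq a_def .
    thus ?thesis using h0 by simp
  qed
  have di: "((\<lambda>t. Re (C i) * cos (real i * t) - Im (C i) * sin (real i * t)) has_real_derivative (- (real i * Im (C i)))) (at 0)" for i
    by (auto intro!: derivative_eq_intros)
  have ds: "((\<lambda>t. \<Sum>i=1..n. Re (C i) * cos (real i * t) - Im (C i) * sin (real i * t)) has_real_derivative (\<Sum>i=1..n. - (real i * Im (C i)))) (at 0)"
    by (rule DERIV_sum) (rule di)
  have "(h has_real_derivative (0 + 2 * (\<Sum>i=1..n. - (real i * Im (C i))))) (at 0)"
    unfolding h_def by (intro DERIV_add DERIV_const DERIV_cmult ds)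
  hence d: "(h has_real_derivative (2 * (\<Sum>i=1..n. - (real i * Im (C i))))) (at 0)" by simp
  have "2 * (\<Sum>i=1..n. - (real i * Im (C i))) = 0"
    by (rule DERIV_local_min[OF d, of 1]) (use hge in auto)
  hence "(\<Sum>i=1..n. real i * Im (C i)) = 0" by (simp add: sum_negf)
  thus ?thesis by (simp add: C_def a_def)
qed

lemma split_sum_2n:
  fixes h :: "nat \<Rightarrow> 'a::comm_monoid_add"
  shows "(\<Sum>m\<le>2*n. h m) = (\<Sum>k=1..n. h (n - k)) + h n + (\<Sum>k=1..n. h (n + k))"
proof -
  have U: "{..2*n} = {..<n} \<union> {n} \<union> {n<..2*n}" by auto
  have "(\<Sum>m\<le>2*n. h m) = (\<Sum>m<n. h m) + h n + (\<Sum>m\<in>{n<..2*n}. h m)"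
    unfolding U by (subst sum.union_disjoint; auto simp: add_ac)+
  moreover have "(\<Sum>m<n. h m) = (\<Sum>k=1..n. h (n - k))"
    by (rule sum.reindex_bij_witness[of _ "\<lambda>k. n - k" "\<lambda>m. n - m"]) auto
  moreover have "(\<Sum>m\<in>{n<..2*n}. h m) = (\<Sum>k=1..n. h (n + k))"
    by (rule sum.reindex_bij_witness[of _ "\<lambda>k. n + k" "\<lambda>m. m - n"]) auto
  ultimately show ?thesis by simp
qed

lemma pderiv_sum_monom:
  "finite A \<Longrightarrow> pderiv (\<Sum>m\<in>A. monom (c m) m) = (\<Sum>m\<in>A. monom (of_nat m * c m) (m - 1))"
  by (induction A rule: finite_induct) (simp_all add: pderiv_add pderiv_monom)

lemma circle_pow:
  fixes z :: complex
  assumes "norm z = 1" "k \<le> n"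
  shows "z ^ (n - k) = z ^ n * cnj z ^ k"
proof -
  have zc: "z * cnj z = 1" using assms(1) complex_norm_square[of z] by simp
  have "z ^ n * cnj z ^ k = z ^ (n - k) * (z * cnj z) ^ k"
    using assms(2) by (simp add: power_mult_distrib power_add[symmetric])
  thus ?thesis using zc by simp
qed

lemma double_roots_dvd:
  fixes p :: "complex poly"
  assumes "finite A" "p \<noteq> 0" "\<And>x. x \<in> A \<Longrightarrow> poly p x = 0 \<and> poly (pderiv p) x = 0"
  shows "(\<Prod>x\<in>A. [:-x, 1:] ^ 2) dvd p"
  using assms(1,3)
proof (induction A rule: finite_induct)
  case empty
  then show ?case by simp
next
  case (insert a A)
  have ord: "2 \<le> order x p" if "poly p x = 0" "poly (pderiv p) x = 0" for x
  proof (cases "pderiv p = 0")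
    case True
    then obtain h where "p = [:h:]" using pderiv_iszero by blast
    thus ?thesis using that assms(2) by simp
  next
    case False
    have "order x (pderiv p) \<noteq> 0" using False that(2) order_root by blast
    moreover have "order x p = Suc (order x (pderiv p))" by (rule order_pderiv[OF assms(2) that(1)])
    ultimately show ?thesis by simp
  qed
  from insert.IH insert.prems obtain q where q: "p = (\<Prod>x\<in>A. [:-x, 1:] ^ 2) * q" by (auto elim!: dvdE)
  have nz: "(\<Prod>x\<in>A. [:-x, 1:] ^ 2) * q \<noteq> 0" using q assms(2) by simp
  have "poly (\<Prod>x\<in>A. [:-x, 1:] ^ 2) a \<noteq> 0" using insert.hyps by (auto simp: poly_prod)
  hence o0: "order a (\<Prod>x\<in>A. [:-x, 1:] ^ 2) = 0" using order_root by blast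
  have "2 \<le> order a p" using ord insert.prems by auto
  hence "2 \<le> order a q" using order_mult[OF nz, of a] o0 q by simp
  hence "[:-a, 1:] ^ 2 dvd q" using order_divides by blast
  hence "[:-a, 1:] ^ 2 * (\<Prod>x\<in>A. [:-x, 1:] ^ 2) dvd (\<Prod>x\<in>A. [:-x, 1:] ^ 2) * q"
    by (simp add: mult.commute mult_dvd_mono)
  thus ?case using insert.hyps q by simp
qed

lemma reflect_lin: "reflect_poly [:- x, 1:] = [:1, - (x::complex):]"
  by (rule poly_eqI) (auto simp: coeff_reflect_poly coeff_pCons split: nat.split)

lemma aux_sum3:
  fixes p c :: "'a::comm_ring"
  shows "(\<Sum>k\<in>K. p * A k) + c * p + (\<Sum>k\<in>K. p * B k) = p * (c + (\<Sum>k\<in>K. A k + B k))"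
  by (simp add: sum.distrib sum_distrib_left algebra_simps)

lemma aux_sum4:
  fixes N :: complex
  shows "(\<Sum>k\<in>K. (N - of_nat k) * cnj (X k) + (N + of_nat k) * X k)
       = N * (\<Sum>k\<in>K. X k + cnj (X k)) + (\<Sum>k\<in>K. of_nat k * (X k - cnj (X k)))"
proof -
  have "(\<Sum>k\<in>K. (N - of_nat k) * cnj (X k) + (N + of_nat k) * X k)
      = (\<Sum>k\<in>K. N * (X k + cnj (X k)) + of_nat k * (X k - cnj (X k)))"
    by (rule sum.cong) (auto simp: algebra_simps)
  also have "\<dots> = N * (\<Sum>k\<in>K. X k + cnj (X k)) + (\<Sum>k\<in>K. of_nat k * (X k - cnj (X k)))"
    by (subst sum.distrib[of "\<lambda>k. N * (X k + cnj (X k))" "\<lambda>k. of_nat k * (X k - cnj (X k))" K])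
       (simp only: sum_distrib_left)
  finally show ?thesis .
qed

lemma poly_part:
  fixes a z :: "nat \<Rightarrow> complex" and n :: nat
  assumes an: "Im (a n) = 0" and a0: "a 0 \<noteq> 0" and inj: "inj_on z {1..n}"
    and zn: "\<And>j. j \<in> {1..n} \<Longrightarrow> norm (z j) = 1"
    and zero: "\<And>j. j \<in> {1..n} \<Longrightarrow> Re (a n + 2 * (\<Sum>i=1..n. a (n - i) * z j ^ i)) = 0"
    and fer: "\<And>j. j \<in> {1..n} \<Longrightarrow> (\<Sum>i=1..n. real i * Im (a (n - i) * z j ^ i)) = 0"
  shows "\<And>m. m \<le> n \<Longrightarrow> a m = a 0 * coeff (\<Prod>j\<in>{1..n}. [:1, - z j:] ^ 2) m"
proof -
  define s where "s m = (if m < n then cnj (a m) else a (2*n - m))" for m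
  define S where "S = (\<Sum>m\<le>2*n. monom (s m) m)"
  have coeffS: "coeff S m = (if m \<le> 2*n then s m else 0)" for m
    by (simp add: S_def coeff_sum)
  have ann: "a n = of_real (Re (a n))" using an by (simp add: complex_eq_iff)
  have polyS: "poly S w = w ^ n * of_real (Re (a n + 2 * (\<Sum>i=1..n. a (n - i) * w ^ i)))"
    and derS: "w * poly (pderiv S) w = w ^ n * (of_nat n * of_real (Re (a n + 2 * (\<Sum>i=1..n. a (n - i) * w ^ i)))
                 + \<i> * of_real (2 * (\<Sum>i=1..n. real i * Im (a (n - i) * w ^ i))))"
    if w: "norm w = 1" for w
  proof -
    define X where "X k = a (n - k) * w ^ k" for k
    have t1: "s (n - k) * w ^ (n - k) = w ^ n * cnj (X k)" if "k \<in> {1..n}" for k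
      using that circle_pow[OF w, of k n] by (simp add: s_def X_def)
    have t2: "s (n + k) * w ^ (n + k) = w ^ n * X k" if "k \<in> {1..n}" for k
    proof -
      have "s (n + k) = a (n - k)" using that by (simp add: s_def)
      thus ?thesis by (simp add: X_def power_add)
    qed
    have RP: "Re (a n + 2 * (\<Sum>i=1..n. a (n - i) * w ^ i)) = Re (a n) + 2 * (\<Sum>k=1..n. Re (X k))"
      by (simp add: X_def)
    have "poly S w = (\<Sum>m\<le>2*n. s m * w ^ m)" by (simp add: S_def poly_sum poly_monom)
    also have "\<dots> = (\<Sum>k=1..n. s (n - k) * w ^ (n - k)) + s n * w ^ n + (\<Sum>k=1..n. s (n + k) * w ^ (n + k))"
      by (rule split_sum_2n)
    also have "\<dots> = (\<Sum>k=1..n. w ^ n * cnj (X k)) + a n * w ^ n + (\<Sum>k=1..n. w ^ n * X k)"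
      using t1 t2 by (simp add: s_def)
    also have "\<dots> = w ^ n * (a n + (\<Sum>k=1..n. X k + cnj (X k)))"
      by (simp add: sum_distrib_left sum.distrib algebra_simps)
    also have "(\<Sum>k=1..n. X k + cnj (X k)) = of_real (2 * (\<Sum>k=1..n. Re (X k)))"
      by (simp add: complex_add_cnj sum_distrib_left)
    finally show "poly S w = w ^ n * of_real (Re (a n + 2 * (\<Sum>i=1..n. a (n - i) * w ^ i)))"
      unfolding RP by (simp add: ann[symmetric])
    have d1: "of_nat (n - k) * s (n - k) * w ^ (n - k) = w ^ n * ((of_nat n - of_nat k) * cnj (X k))" if "k \<in> {1..n}" for k
      using t1[OF that] that by (simp add: of_nat_diff algebra_simps)
    have d2: "of_nat (n + k) * s (n + k) * w ^ (n + k) = w ^ n * ((of_nat n + of_nat k) * X k)" if "k \<in> {1..n}" for k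
      using t2[OF that] by (simp add: algebra_simps)
    have wp: "w * (of_nat m * s m * w ^ (m - 1)) = of_nat m * s m * w ^ m" for m
      by (cases m) auto
    have "w * poly (pderiv S) w = w * (\<Sum>m\<le>2*n. of_nat m * s m * w ^ (m - 1))"
      by (simp add: S_def pderiv_sum_monom poly_sum poly_monom)
    also have "\<dots> = (\<Sum>m\<le>2*n. of_nat m * s m * w ^ m)"
      by (subst sum_distrib_left) (rule sum.cong[OF refl wp])
    also have "\<dots> = (\<Sum>k=1..n. of_nat (n - k) * s (n - k) * w ^ (n - k)) + of_nat n * s n * w ^ n
                   + (\<Sum>k=1..n. of_nat (n + k) * s (n + k) * w ^ (n + k))"
      by (rule split_sum_2n)
    also have "\<dots> = (\<Sum>k=1..n. w ^ n * ((of_nat n - of_nat k) * cnj (X k))) + of_nat n * a n * w ^ n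
                   + (\<Sum>k=1..n. w ^ n * ((of_nat n + of_nat k) * X k))"
    proof -
      have e1: "(\<Sum>k=1..n. of_nat (n - k) * s (n - k) * w ^ (n - k)) = (\<Sum>k=1..n. w ^ n * ((of_nat n - of_nat k) * cnj (X k)))"
        by (rule sum.cong[OF refl d1])
      have e2: "(\<Sum>k=1..n. of_nat (n + k) * s (n + k) * w ^ (n + k)) = (\<Sum>k=1..n. w ^ n * ((of_nat n + of_nat k) * X k))"
        by (rule sum.cong[OF refl d2])
      have e3: "s n = a n" by (simp add: s_def)
      show ?thesis by (simp only: e1 e2 e3)
    qed
    also have "\<dots> = w ^ n * (of_nat n * a n + (\<Sum>k=1..n. (of_nat n - of_nat k) * cnj (X k) + (of_nat n + of_nat k) * X k))"
      by (rule aux_sum3)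
    also have "(\<Sum>k=1..n. (of_nat n - of_nat k) * cnj (X k) + (of_nat n + of_nat k) * X k)
             = of_nat n * (\<Sum>k=1..n. X k + cnj (X k)) + (\<Sum>k=1..n. of_nat k * (X k - cnj (X k)))"
      by (rule aux_sum4)
    also have "(\<Sum>k=1..n. X k + cnj (X k)) = of_real (2 * (\<Sum>k=1..n. Re (X k)))"
      by (simp add: complex_add_cnj sum_distrib_left)
    also have "(\<Sum>k=1..n. of_nat k * (X k - cnj (X k))) = \<i> * of_real (2 * (\<Sum>k=1..n. real k * Im (X k)))"
      by (simp add: complex_diff_cnj sum_distrib_left algebra_simps)
    finally show "w * poly (pderiv S) w = w ^ n * (of_nat n * of_real (Re (a n + 2 * (\<Sum>i=1..n. a (n - i) * w ^ i)))
                 + \<i> * of_real (2 * (\<Sum>i=1..n. real i * Im (a (n - i) * w ^ i))))"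
      unfolding RP by (simp add: X_def algebra_simps ann[symmetric])
  qed
  have roots: "poly S x = 0 \<and> poly (pderiv S) x = 0" if xz: "x \<in> z ` {1..n}" for x
  proof -
    obtain j where j: "j \<in> {1..n}" "x = z j" using xz by auto
    have x1: "norm (z j) = 1" using zn j by simp
    hence x0: "z j \<noteq> 0" by auto
    have "z j * poly (pderiv S) (z j) = z j ^ n * (of_nat n * of_real 0 + \<i> * of_real (2 * 0))"
      using derS[OF x1] unfolding zero[OF j(1)] fer[OF j(1)] .
    hence "z j * poly (pderiv S) (z j) = 0" by simp
    hence d: "poly (pderiv S) (z j) = 0" using x0 by simp
    have "poly S (z j) = z j ^ n * of_real 0"
      using polyS[OF x1] unfolding zero[OF j(1)] .
    thus ?thesis using d j(2) by simp
  qed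
  have cS: "coeff S (2*n) = a 0" by (simp add: coeffS s_def)
  hence S0: "S \<noteq> 0" using a0 by auto
  have degS: "degree S = 2*n"
  proof (rule antisym)
    show "degree S \<le> 2*n" by (rule degree_le) (simp add: coeffS)
    show "2*n \<le> degree S" using cS a0 by (intro le_degree) simp
  qed
  define Q where "Q = (\<Prod>j\<in>{1..n}. [:- z j, 1:] ^ 2)"
  have "(\<Prod>x\<in>z ` {1..n}. [:-x, 1:] ^ 2) dvd S"
    by (rule double_roots_dvd[OF _ S0 roots]) auto
  hence "Q dvd S" unfolding Q_def using inj by (simp add: prod.reindex)
  then obtain r where r: "S = Q * r" by (elim dvdE)
  have Q0: "Q \<noteq> 0" using r S0 by auto
  have r0: "r \<noteq> 0" using r S0 by auto
  have degQ: "degree Q = 2*n"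
  proof -
    have "degree Q = (\<Sum>j\<in>{1..n}. degree ([:- z j, 1:] ^ 2))"
      unfolding Q_def by (rule degree_prod_eq_sum_degree) auto
    also have "\<dots> = (\<Sum>j\<in>{1..n}. 2)" by (simp add: degree_linear_power)
    finally show ?thesis by simp
  qed
  have lQ: "lead_coeff Q = 1" unfolding Q_def by (simp add: lead_coeff_prod lead_coeff_power)
  have "degree r = 0" using degree_mult_eq[OF Q0 r0] r degS degQ by simp
  then obtain c where c: "r = [:c:]" by (elim degree_eq_zeroE)
  have Sc: "coeff S m = c * coeff Q m" for m using r c by simp
  have cc: "c = a 0" using Sc[of "2*n"] cS lQ degQ by simp
  have rQ: "reflect_poly Q = (\<Prod>j\<in>{1..n}. [:1, - z j:] ^ 2)"
    unfolding Q_def by (simp add: reflect_poly_prod reflect_poly_power reflect_lin)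
  fix m assume m: "m \<le> n"
  have nl: "\<not> (2*n - m < n)" "2*n - m \<le> 2*n" "2*n - (2*n - m) = m" using m by linarith+
  have "a m = coeff S (2*n - m)" unfolding coeffS s_def using nl by simp
  also have "\<dots> = a 0 * coeff Q (2*n - m)" by (simp add: Sc cc)
  also have "coeff Q (2*n - m) = coeff (reflect_poly Q) m" using m degQ by (simp add: coeff_reflect_poly)
  finally show "a m = a 0 * coeff (\<Prod>j\<in>{1..n}. [:1, - z j:] ^ 2) m" unfolding rQ .
qed

lemma fps_deriv_prod_log:
  fixes F H :: "'b \<Rightarrow> complex fps"
  assumes "finite A" "\<And>j. j \<in> A \<Longrightarrow> fps_deriv (F j) = F j * H j"
  shows "fps_deriv (\<Prod>j\<in>A. F j) = (\<Prod>j\<in>A. F j) * (\<Sum>j\<in>A. H j)"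
  using assms
proof (induction A rule: finite_induct)
  case empty
  then show ?case by simp
next
  case (insert a A)
  have "fps_deriv (\<Prod>j\<in>insert a A. F j) = fps_deriv (F a * (\<Prod>j\<in>A. F j))"
    using insert.hyps by simp
  also have "\<dots> = F a * ((\<Prod>j\<in>A. F j) * (\<Sum>j\<in>A. H j)) + F a * H a * (\<Prod>j\<in>A. F j)"
    using insert.IH insert.prems by simp
  also have "\<dots> = (F a * (\<Prod>j\<in>A. F j)) * (H a + (\<Sum>j\<in>A. H j))"
    by (simp add: algebra_simps)
  finally show ?case using insert.hyps by simp
qed

lemma lin_geo:
  fixes x :: complex
  shows "(1 + fps_const (- x) * fps_X) * Abs_fps (\<lambda>k. x ^ k) = 1"
proof (rule fps_ext)
  fix k
  show "((1 + fps_const (- x) * fps_X) * Abs_fps (\<lambda>k. x ^ k)) $ k = (1 :: complex fps) $ k"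
    by (cases k) (simp_all add: algebra_simps mult.assoc)
qed

lemma lin_sq_deriv:
  fixes x :: complex
  defines "L \<equiv> 1 + fps_const (- x) * fps_X"
  shows "fps_deriv (L ^ 2) = L ^ 2 * (fps_const (- 2 * x) * Abs_fps (\<lambda>k. x ^ k))"
proof -
  have "fps_deriv (L ^ 2) = fps_const (- 2 * x) * L"
    by (simp add: L_def power2_eq_square algebra_simps)
  also have "\<dots> = fps_const (- 2 * x) * L * (L * Abs_fps (\<lambda>k. x ^ k))"
    using lin_geo[of x] by (simp add: L_def)
  also have "\<dots> = L ^ 2 * (fps_const (- 2 * x) * Abs_fps (\<lambda>k. x ^ k))"
    by (simp add: power2_eq_square algebra_simps)
  finally show ?thesis .
qed

lemma R_rec:
  fixes z :: "nat \<Rightarrow> complex" and n m :: nat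
  defines "R \<equiv> (\<Prod>j\<in>{1..n}. [:1, - z j:] ^ 2)"
  shows "of_nat (Suc m) * coeff R (Suc m) = (\<Sum>i=0..m. coeff R i * (- 2 * (\<Sum>j\<in>{1..n}. z j ^ Suc (m - i))))"
proof -
  define L where "L j = 1 + fps_const (- z j) * fps_X" for j
  define H where "H j = fps_const (- 2 * z j) * Abs_fps (\<lambda>k. z j ^ k)" for j
  have RF: "fps_of_poly R = (\<Prod>j\<in>{1..n}. L j ^ 2)"
    by (simp add: R_def fps_of_poly_prod fps_of_poly_power L_def fps_of_poly_pCons fps_of_poly_const)
  have "fps_deriv (\<Prod>j\<in>{1..n}. L j ^ 2) = (\<Prod>j\<in>{1..n}. L j ^ 2) * (\<Sum>j\<in>{1..n}. H j)"
    by (rule fps_deriv_prod_log) (auto simp: L_def H_def lin_sq_deriv)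
  hence "fps_deriv (fps_of_poly R) $ m = (fps_of_poly R * (\<Sum>j\<in>{1..n}. H j)) $ m" by (simp add: RF)
  hence "of_nat (Suc m) * coeff R (Suc m) = (\<Sum>i=0..m. coeff R i * (\<Sum>j\<in>{1..n}. H j) $ (m - i))"
    by (simp add: fps_mult_nth)
  also have "\<dots> = (\<Sum>i=0..m. coeff R i * (- 2 * (\<Sum>j\<in>{1..n}. z j ^ Suc (m - i))))"
    by (simp add: fps_sum_nth H_def sum_distrib_left mult.assoc)
  finally show ?thesis .
qed

lemma f_rec:
  assumes fh: "f holomorphic_on ball 0 1" and gh: "g holomorphic_on ball 0 1"
    and fg: "\<And>w. w \<in> ball 0 1 \<Longrightarrow> exp (g w) = f w"
  shows "of_nat (Suc m) * taylor_coeff f (Suc m)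
       = (\<Sum>i=0..m. of_nat (Suc i) * taylor_coeff g (Suc i) * taylor_coeff f (m - i))"
proof -
  have dfw: "deriv f w = deriv g w * f w" if w: "w \<in> ball 0 1" for w
  proof -
    have ev: "eventually (\<lambda>x. f x = exp (g x)) (nhds w)"
      unfolding eventually_nhds using w fg by (intro exI[of _ "ball 0 1"]) auto
    have "deriv f w = deriv (\<lambda>x. exp (g x)) w" by (rule deriv_cong_ev[OF ev refl])
    moreover have "(g has_field_derivative deriv g w) (at w)"
      using gh w by (auto intro: holomorphic_derivI)
    hence "((\<lambda>x. exp (g x)) has_field_derivative exp (g w) * deriv g w) (at w)"
      by (auto intro!: derivative_eq_intros)
    ultimately show ?thesis using fg[OF w] DERIV_imp_deriv by (metis mult.commute)
  qed
  have dgh: "deriv g holomorphic_on ball 0 1" using gh by (intro holomorphic_deriv) auto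
  have "of_nat (Suc m) * taylor_coeff f (Suc m) = taylor_coeff (deriv f) m" by (simp add: tc_deriv)
  also have "\<dots> = taylor_coeff (\<lambda>w. deriv g w * f w) m" by (rule tc_cong) (simp add: dfw)
  also have "\<dots> = (\<Sum>i=0..m. taylor_coeff (deriv g) i * taylor_coeff f (m - i))" by (rule tc_mult[OF dgh fh])
  also have "\<dots> = (\<Sum>i=0..m. of_nat (Suc i) * taylor_coeff g (Suc i) * taylor_coeff f (m - i))"
    by (simp add: tc_deriv)
  finally show ?thesis .
qed

theorem corollary4:
  fixes n :: nat and f g :: "complex \<Rightarrow> complex" and z :: "nat \<Rightarrow> complex"
  assumes "extremal n f"
    and "f 0 \<in> \<real>" and "Re (f 0) > 0"
    and "g holomorphic_on ball 0 1" and "\<And>w. w \<in> ball 0 1 \<Longrightarrow> exp (g w) = f w"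
    and "inj_on z {1..n}"
    and "\<And>j. j \<in> {1..n} \<Longrightarrow> norm (z j) = 1"
    and "\<And>j. j \<in> {1..n} \<Longrightarrow>
           Re (taylor_coeff f n + 2 * (\<Sum>i=1..n. taylor_coeff f (n - i) * z j ^ i)) = 0"
  shows "\<forall>k\<in>{1..n}. taylor_coeff g k = - (2 / of_nat k) * (\<Sum>j=1..n. z j ^ k)"
proof -
  note ext0 = assms(1)
  define a where "a = taylor_coeff f"
  define b where "b = taylor_coeff g"
  define R where "R = (\<Prod>j\<in>{1..n}. [:1, - z j:] ^ 2)"
  define r where "r = coeff R"
  define beta where "beta k = - (2 / of_nat k) * (\<Sum>j=1..n. z j ^ k)" for k
  have fB: "f \<in> B0" using ext0 by (simp add: extremal_def)
  have fh: "f holomorphic_on ball 0 1" using fB by (simp add: B0_def)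
  have an: "Im (a n) = 0" unfolding a_def by (rule extremal_real[OF ext0])
  have a0: "a 0 \<noteq> 0" using assms(3) by (auto simp: a_def tc_0)
  have fer: "(\<Sum>i=1..n. real i * Im (a (n - i) * z j ^ i)) = 0" if "j \<in> {1..n}" for j
    unfolding a_def by (rule fermat_step[OF ext0 assms(7)[OF that] assms(8)[OF that]])
  have zero: "Re (a n + 2 * (\<Sum>i=1..n. a (n - i) * z j ^ i)) = 0" if "j \<in> {1..n}" for j
    using assms(8)[OF that] by (simp only: a_def)
  have ar: "a m = a 0 * r m" if "m \<le> n" for m
    unfolding r_def R_def
    by (rule poly_part[OF an a0 assms(6) assms(7) zero fer that])
  have r0: "r 0 = 1" using ar[of 0] a0 by simp
  have frec: "of_nat (Suc m) * a (Suc m) = (\<Sum>i=0..m. of_nat (Suc i) * b (Suc i) * a (m - i))" for m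
    unfolding a_def b_def by (rule f_rec[OF fh assms(4,5)])
  have rrec: "of_nat (Suc m) * r (Suc m) = (\<Sum>i=0..m. of_nat (Suc i) * beta (Suc i) * r (m - i))" for m
  proof -
    have "of_nat (Suc m) * r (Suc m) = (\<Sum>i=0..m. r i * (- 2 * (\<Sum>j\<in>{1..n}. z j ^ Suc (m - i))))"
      unfolding r_def R_def by (rule R_rec)
    also have "\<dots> = (\<Sum>i=0..m. r (m - i) * (- 2 * (\<Sum>j\<in>{1..n}. z j ^ Suc (m - (m - i)))))"
      by (subst sum.atLeastAtMost_rev) simp
    also have "\<dots> = (\<Sum>i=0..m. of_nat (Suc i) * beta (Suc i) * r (m - i))"
    proof (rule sum.cong[OF refl])
      fix i assume "i \<in> {0..m}"
      hence "m - (m - i) = i" by auto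
      moreover have "of_nat (Suc i) * beta (Suc i) = - 2 * (\<Sum>j\<in>{1..n}. z j ^ Suc i)"
        by (simp add: beta_def del: of_nat_Suc)
      ultimately show "r (m - i) * (- 2 * (\<Sum>j\<in>{1..n}. z j ^ Suc (m - (m - i)))) = of_nat (Suc i) * beta (Suc i) * r (m - i)"
        by simp
    qed
    finally show ?thesis .
  qed
  have main: "Suc m \<le> n \<longrightarrow> b (Suc m) = beta (Suc m)" for m
  proof (induction m rule: less_induct)
    case (less m)
    show ?case
    proof
      assume mn: "Suc m \<le> n"
      have IH: "b (Suc i) = beta (Suc i)" if im: "i < m" for i
      proof -
        have "Suc i \<le> n" using im mn by linarith
        thus ?thesis using less.IH[OF im] by blast
      qed
      have "of_nat (Suc m) * a (Suc m) = a 0 * (of_nat (Suc m) * r (Suc m))"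
        using ar[OF mn] by (simp only: mult.left_commute)
      also have "\<dots> = a 0 * (\<Sum>i=0..m. of_nat (Suc i) * beta (Suc i) * r (m - i))"
        by (simp only: rrec)
      finally have E1: "of_nat (Suc m) * a (Suc m) = a 0 * (\<Sum>i=0..m. of_nat (Suc i) * beta (Suc i) * r (m - i))" .
      have "of_nat (Suc m) * a (Suc m) = (\<Sum>i=0..m. of_nat (Suc i) * b (Suc i) * a (m - i))" by (rule frec)
      also have "\<dots> = (\<Sum>i=0..m. a 0 * (of_nat (Suc i) * b (Suc i) * r (m - i)))"
      proof (rule sum.cong[OF refl])
        fix i assume "i \<in> {0..m}"
        hence "m - i \<le> n" using mn by auto
        thus "of_nat (Suc i) * b (Suc i) * a (m - i) = a 0 * (of_nat (Suc i) * b (Suc i) * r (m - i))"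
          using ar[OF \<open>m - i \<le> n\<close>] by (simp only: mult.left_commute)
      qed
      also have "\<dots> = a 0 * (\<Sum>i=0..m. of_nat (Suc i) * b (Suc i) * r (m - i))"
        by (simp only: sum_distrib_left)
      finally have E2: "of_nat (Suc m) * a (Suc m) = a 0 * (\<Sum>i=0..m. of_nat (Suc i) * b (Suc i) * r (m - i))" .
      have "a 0 * (\<Sum>i=0..m. of_nat (Suc i) * beta (Suc i) * r (m - i))
          = a 0 * (\<Sum>i=0..m. of_nat (Suc i) * b (Suc i) * r (m - i))" by (rule trans[OF sym[OF E1] E2])
      hence "(\<Sum>i=0..m. of_nat (Suc i) * beta (Suc i) * r (m - i))
          = (\<Sum>i=0..m. of_nat (Suc i) * b (Suc i) * r (m - i))" using a0 by simp
      hence "(\<Sum>i=0..<m. of_nat (Suc i) * beta (Suc i) * r (m - i)) + of_nat (Suc m) * beta (Suc m) * r (m - m)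
           = (\<Sum>i=0..<m. of_nat (Suc i) * b (Suc i) * r (m - i)) + of_nat (Suc m) * b (Suc m) * r (m - m)"
        by (simp only: atLeastLessThanSuc_atLeastAtMost[symmetric] sum.atLeast0_lessThan_Suc)
      moreover have "(\<Sum>i=0..<m. of_nat (Suc i) * beta (Suc i) * r (m - i)) = (\<Sum>i=0..<m. of_nat (Suc i) * b (Suc i) * r (m - i))"
        by (rule sum.cong[OF refl]) (simp add: IH)
      ultimately have "of_nat (Suc m) * beta (Suc m) * r (m - m) = of_nat (Suc m) * b (Suc m) * r (m - m)" by simp
      hence "of_nat (Suc m) * beta (Suc m) = of_nat (Suc m) * b (Suc m)" using r0 by simp
      thus "b (Suc m) = beta (Suc m)" by (simp del: of_nat_Suc)
    qed
  qed
  show ?thesis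
  proof
    fix k assume k: "k \<in> {1..n}"
    then obtain m where m: "k = Suc m" by (cases k) auto
    hence "b k = beta k" using main[of m] k by simp
    thus "taylor_coeff g k = - (2 / of_nat k) * (\<Sum>j=1..n. z j ^ k)" by (simp add: b_def beta_def)
  qed
qed

end
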